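(* Let $G=(V,E)$ be a graph, $v\in V$, $d\geq 1$, and suppose $r_d(G)\geq r_d(G-v)+d+t$ for some $t\geq 0$. Then $$\mathrm{rc}^*_d(G,v)\geq d+\frac{t(\deg(v)-d+1)-d(d+1)}{2(\deg(v)+1)}.$$
   Context: $r_d$ is the rank function of the $d$-dimensional generic rigidity matroid $\mathcal{R}_d$ (linear independence of rows of the rigidity matrix of a generic $d$-dimensional framework); $r_d(H)$ is the rank of $E(H)$. Let $\pi$ be a uniformly random ordering of $V$, $T_v^\pi$ the set of vertices preceding $v$ in $\pi$, $E_v$ the set of edges incident with $v$, and $E_v^\pi=\{vu\in E_v: u\in T_v^\pi\}$. Define $\mathrm{rc}^*_d(G,v,\pi)=r_d(G-E_v+E_v^\pi)-r_d(G-v)$ and $\mathrm{rc}^*_d(G,v)=\mathbb{E}(\mathrm{rc}^*_d(G,v,\pi))$. *)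

theory Defs
  imports Complex_Main
begin

definition is_graph :: "'a set \<Rightarrow> 'a set set \<Rightarrow> bool" where
  "is_graph V E \<longleftrightarrow> finite V \<and> (\<forall>e\<in>E. e \<subseteq> V \<and> card e = 2)"

definition inc_edges :: "'a set set \<Rightarrow> 'a \<Rightarrow> 'a set set" where
  "inc_edges E v = {e\<in>E. v \<in> e}"

definition degree :: "'a set set \<Rightarrow> 'a \<Rightarrow> nat" where
  "degree E v = card (inc_edges E v)"

(* Row of the rigidity matrix of the d-dimensional framework p (coordinates
   p w i, i < d) corresponding to the edge e = {w,u}: entry at (w,i) is
   p w i - p u i, entries at vertices not in e are 0. *)
definition rig_row :: "('a \<Rightarrow> nat \<Rightarrow> real) \<Rightarrow> 'a set \<Rightarrow> 'a \<Rightarrow> nat \<Rightarrow> real" where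
  "rig_row p e w i = (if w \<in> e then p w i - p (THE u. u \<in> e \<and> u \<noteq> w) i else 0)"

definition rows_indep :: "nat \<Rightarrow> ('a \<Rightarrow> nat \<Rightarrow> real) \<Rightarrow> 'a set set \<Rightarrow> bool" where
  "rows_indep d p F \<longleftrightarrow> finite F \<and>
     (\<forall>c :: 'a set \<Rightarrow> real.
        (\<forall>w i. i < d \<longrightarrow> (\<Sum>e\<in>F. c e * rig_row p e w i) = 0) \<longrightarrow> (\<forall>e\<in>F. c e = 0))"

(* independence in the generic d-dimensional rigidity matroid: rows independent
   for a generic framework, equivalently for some framework (generic
   frameworks maximise the rank of every row subset). *)
definition rig_indep :: "nat \<Rightarrow> 'a set set \<Rightarrow> bool" where
  "rig_indep d F \<longleftrightarrow> (\<exists>p. rows_indep d p F)"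

definition rig_rank :: "nat \<Rightarrow> 'a set set \<Rightarrow> nat" where
  "rig_rank d E = Max (card ` {F. F \<subseteq> E \<and> rig_indep d F})"

definition orderings :: "'a set \<Rightarrow> 'a list set" where
  "orderings V = {xs. distinct xs \<and> set xs = V}"

definition preceding :: "'a list \<Rightarrow> 'a \<Rightarrow> 'a set" where
  "preceding \<pi> v = {\<pi> ! i | i j. i < j \<and> j < length \<pi> \<and> \<pi> ! j = v}"

definition inc_edges_pi :: "'a set set \<Rightarrow> 'a \<Rightarrow> 'a list \<Rightarrow> 'a set set" where
  "inc_edges_pi E v \<pi> = {e \<in> inc_edges E v. \<exists>u \<in> preceding \<pi> v. e = {v, u}}"

definition rc_star_pi :: "nat \<Rightarrow> 'a set set \<Rightarrow> 'a \<Rightarrow> 'a list \<Rightarrow> real" where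
  "rc_star_pi d E v \<pi> =
     real (rig_rank d ((E - inc_edges E v) \<union> inc_edges_pi E v \<pi>))
     - real (rig_rank d (E - inc_edges E v))"

definition rc_star :: "nat \<Rightarrow> 'a set \<Rightarrow> 'a set set \<Rightarrow> 'a \<Rightarrow> real" where
  "rc_star d V E v =
     (\<Sum>\<pi>\<in>orderings V. rc_star_pi d E v \<pi>) / real (card (orderings V))"

end

theory Submission
  imports "Jordan_Normal_Form.Determinant" "HOL-Library.Function_Algebras" Defs
begin


lemma preceding_split:
  assumes "distinct (xs @ v # ys)"
  shows "preceding (xs @ v # ys) v = set xs"
proof -
  let ?p = "xs @ v # ys"
  have j: "\<And>j. j < length ?p \<Longrightarrow> ?p ! j = v \<longleftrightarrow> j = length xs"
  proof -
    fix j assume "j < length ?p"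
    have "?p ! length xs = v" by simp
    moreover have "length xs < length ?p" by simp
    ultimately show "?p ! j = v \<longleftrightarrow> j = length xs"
      using nth_eq_iff_index_eq[OF assms \<open>j < length ?p\<close>, of "length xs"] by auto
  qed
  have "preceding ?p v = {?p ! i | i. i < length xs}"
    unfolding preceding_def
  proof (intro equalityI subsetI)
    fix x assume "x \<in> {?p ! i | i j. i < j \<and> j < length ?p \<and> ?p ! j = v}"
    then obtain i j where "x = ?p ! i" "i < j" "j < length ?p" "?p ! j = v" by blast
    with j show "x \<in> {?p ! i | i. i < length xs}" by auto
  next
    fix x assume "x \<in> {?p ! i | i. i < length xs}"
    then obtain i where "x = ?p ! i" "i < length xs" by blast
    then show "x \<in> {?p ! i | i j. i < j \<and> j < length ?p \<and> ?p ! j = v}"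
      by (intro CollectI exI[of _ i] exI[of _ "length xs"]) (auto simp: nth_append)
  qed
  also have "\<dots> = {xs ! i | i. i < length xs}" by (auto simp: nth_append)
  also have "\<dots> = set xs" by (auto simp: set_conv_nth)
  finally show ?thesis .
qed

lemma app_x_inj:
  assumes "xs @ x # ys = xs' @ x # ys'" "x \<notin> set xs" "x \<notin> set xs'"
  shows "xs = xs' \<and> ys = ys'"
proof -
  have tw: "\<And>zs ws. x \<notin> set zs \<Longrightarrow> takeWhile (\<lambda>y. y \<noteq> x) (zs @ x # ws) = zs"
    subgoal for zs ws by (induction zs) auto done
  have a: "takeWhile (\<lambda>y. y \<noteq> x) (xs @ x # ys) = xs" using assms(2) tw by blast
  have b: "takeWhile (\<lambda>y. y \<noteq> x) (xs' @ x # ys') = xs'" using assms(3) tw by blast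
  have "xs = xs'" using a b assms(1) by simp
  with assms(1) show ?thesis by simp
qed

lemma orderings_length: "\<sigma> \<in> orderings B \<Longrightarrow> length \<sigma> = card B"
  unfolding orderings_def using distinct_card by fastforce

lemma finite_orderings: "finite B \<Longrightarrow> finite (orderings B)"
proof -
  assume "finite B"
  have "orderings B \<subseteq> {xs. set xs \<subseteq> B \<and> length xs \<le> card B}"
    using orderings_length unfolding orderings_def by fastforce
  moreover have "finite {xs. set xs \<subseteq> B \<and> length xs \<le> card B}"
    using finite_lists_length_le[OF \<open>finite B\<close>] by simp
  ultimately show ?thesis by (rule finite_subset)
qed

lemma orderings_nonempty: "finite B \<Longrightarrow> orderings B \<noteq> {}"
  unfolding orderings_def using finite_distinct_list by blast

lemma ins_bij:
  assumes "x \<notin> B"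
  shows "bij_betw (\<lambda>(\<sigma>, j). take j \<sigma> @ x # drop j \<sigma>) (orderings B \<times> {..card B}) (orderings (insert x B))"
  unfolding bij_betw_def
proof (intro conjI)
  show "inj_on (\<lambda>(\<sigma>, j). take j \<sigma> @ x # drop j \<sigma>) (orderings B \<times> {..card B})"
  proof (rule inj_onI)
    fix p q assume pq: "p \<in> orderings B \<times> {..card B}" "q \<in> orderings B \<times> {..card B}"
      "(\<lambda>(\<sigma>, j). take j \<sigma> @ x # drop j \<sigma>) p = (\<lambda>(\<sigma>, j). take j \<sigma> @ x # drop j \<sigma>) q"
    obtain \<sigma> j \<sigma>' j' where pq': "p = (\<sigma>, j)" "q = (\<sigma>', j')" by fastforce
    have s: "\<sigma> \<in> orderings B" "j \<in> {..card B}" "\<sigma>' \<in> orderings B" "j' \<in> {..card B}"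
      using pq pq' by auto
    have eq: "take j \<sigma> @ x # drop j \<sigma> = take j' \<sigma>' @ x # drop j' \<sigma>'" using pq pq' by simp
    have "x \<notin> set (take j \<sigma>)" "x \<notin> set (take j' \<sigma>')"
      using s assms unfolding orderings_def by (auto dest: in_set_takeD)
    from app_x_inj[OF eq this] have e: "take j \<sigma> = take j' \<sigma>'" "drop j \<sigma> = drop j' \<sigma>'" by auto
    have "length \<sigma> = card B" "length \<sigma>' = card B" using s orderings_length by auto
    moreover have "length (take j \<sigma>) = length (take j' \<sigma>')" using e(1) by simp
    ultimately have "j = j'" using s by simp
    moreover have "\<sigma> = \<sigma>'" using e by (metis append_take_drop_id)
    ultimately show "p = q" using pq' by simp
  qed
next
  show "(\<lambda>(\<sigma>, j). take j \<sigma> @ x # drop j \<sigma>) ` (orderings B \<times> {..card B}) = orderings (insert x B)"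
  proof (intro equalityI subsetI)
    fix y assume "y \<in> (\<lambda>(\<sigma>, j). take j \<sigma> @ x # drop j \<sigma>) ` (orderings B \<times> {..card B})"
    then obtain \<sigma> j where s: "\<sigma> \<in> orderings B" and y: "y = take j \<sigma> @ x # drop j \<sigma>" by auto
    have d: "distinct \<sigma>" "set \<sigma> = B" using s unfolding orderings_def by auto
    have "distinct (take j \<sigma> @ drop j \<sigma>)" using d by simp
    then have dd: "distinct (take j \<sigma>) \<and> distinct (drop j \<sigma>) \<and> set (take j \<sigma>) \<inter> set (drop j \<sigma>) = {}"
      by (simp only: distinct_append)
    have xn: "x \<notin> set (take j \<sigma>)" "x \<notin> set (drop j \<sigma>)" using d assms by (auto dest: in_set_takeD in_set_dropD)
    have "distinct y" unfolding y using dd xn by auto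
    moreover have "set (take j \<sigma>) \<union> set (drop j \<sigma>) = set \<sigma>"
      by (metis append_take_drop_id set_append)
    then have "set y = insert x B" unfolding y using d by auto
    ultimately show "y \<in> orderings (insert x B)" unfolding orderings_def by simp
  next
    fix y assume "y \<in> orderings (insert x B)"
    then have d: "distinct y" "set y = insert x B" unfolding orderings_def by auto
    then have "x \<in> set y" by auto
    then obtain xs ys where y: "y = xs @ x # ys" "x \<notin> set xs" using split_list_first by metis
    let ?\<sigma> = "xs @ ys"
    have "distinct ?\<sigma>" using d(1) y by auto
    moreover have "set ?\<sigma> = B" using d y assms by auto
    ultimately have s: "?\<sigma> \<in> orderings B" unfolding orderings_def by simp
    have "length xs \<le> card B" using orderings_length[OF s] by simp
    moreover have "y = take (length xs) ?\<sigma> @ x # drop (length xs) ?\<sigma>" using y by simp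
    ultimately show "y \<in> (\<lambda>(\<sigma>, j). take j \<sigma> @ x # drop j \<sigma>) ` (orderings B \<times> {..card B})"
      using s by (intro image_eqI[of _ _ "(?\<sigma>, length xs)"]) auto
  qed
qed

lemma sum_ins:
  assumes "x \<notin> B"
  shows "(\<Sum>\<pi>\<in>orderings (insert x B). G \<pi>) =
         (\<Sum>\<sigma>\<in>orderings B. \<Sum>j\<in>{..card B}. G (take j \<sigma> @ x # drop j \<sigma>))"
proof -
  have "(\<Sum>\<pi>\<in>orderings (insert x B). G \<pi>) =
        (\<Sum>p\<in>orderings B \<times> {..card B}. G ((\<lambda>(\<sigma>, j). take j \<sigma> @ x # drop j \<sigma>) p))"
    using sum.reindex_bij_betw[OF ins_bij[OF assms], of G] by simp
  also have "\<dots> = (\<Sum>\<sigma>\<in>orderings B. \<Sum>j\<in>{..card B}. G (take j \<sigma> @ x # drop j \<sigma>))"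
    by (simp add: sum.cartesian_product split_def)
  finally show ?thesis .
qed

lemma filter_reduce:
  assumes "finite D" "A \<inter> D = {}" "finite A"
  shows "\<exists>c::nat. c > 0 \<and> (\<forall>\<Phi>::'a list \<Rightarrow> real.
     (\<Sum>\<pi>\<in>orderings (A \<union> D). \<Phi> (filter (\<lambda>x. x \<in> A) \<pi>)) = real c * (\<Sum>\<tau>\<in>orderings A. \<Phi> \<tau>))"
  using assms(1,2)
proof (induction D rule: finite_induct)
  case empty
  have "\<And>\<tau>. \<tau> \<in> orderings A \<Longrightarrow> filter (\<lambda>x. x \<in> A) \<tau> = \<tau>"
    unfolding orderings_def by auto
  then show ?case by (intro exI[of _ 1]) auto
next
  case (insert x D)
  then obtain c where c: "c > 0" "\<And>\<Phi>::'a list \<Rightarrow> real.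
     (\<Sum>\<pi>\<in>orderings (A \<union> D). \<Phi> (filter (\<lambda>x. x \<in> A) \<pi>)) = real c * (\<Sum>\<tau>\<in>orderings A. \<Phi> \<tau>)"
    by auto
  have xA: "x \<notin> A \<union> D" using insert by auto
  have eq: "A \<union> insert x D = insert x (A \<union> D)" by auto
  show ?case
  proof (intro exI[of _ "c * (card (A \<union> D) + 1)"] conjI allI)
    show "c * (card (A \<union> D) + 1) > 0" using c by simp
    fix \<Phi> :: "'a list \<Rightarrow> real"
    have "(\<Sum>\<pi>\<in>orderings (A \<union> insert x D). \<Phi> (filter (\<lambda>x. x \<in> A) \<pi>))
       = (\<Sum>\<sigma>\<in>orderings (A \<union> D). \<Sum>j\<in>{..card (A \<union> D)}.
            \<Phi> (filter (\<lambda>x. x \<in> A) (take j \<sigma> @ x # drop j \<sigma>)))"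
      unfolding eq by (rule sum_ins[OF xA])
    also have "\<dots> = (\<Sum>\<sigma>\<in>orderings (A \<union> D). \<Sum>j\<in>{..card (A \<union> D)}. \<Phi> (filter (\<lambda>x. x \<in> A) \<sigma>))"
    proof (intro sum.cong refl)
      fix \<sigma> j
      have "filter (\<lambda>x. x \<in> A) (take j \<sigma> @ x # drop j \<sigma>) = filter (\<lambda>x. x \<in> A) (take j \<sigma> @ drop j \<sigma>)"
        using xA by (simp only: filter_append filter.simps) simp
      then show "\<Phi> (filter (\<lambda>x. x \<in> A) (take j \<sigma> @ x # drop j \<sigma>)) = \<Phi> (filter (\<lambda>x. x \<in> A) \<sigma>)"
        by simp
    qed
    also have "\<dots> = real (card (A \<union> D) + 1) * (\<Sum>\<sigma>\<in>orderings (A \<union> D). \<Phi> (filter (\<lambda>x. x \<in> A) \<sigma>))"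
      by (simp add: sum_distrib_left)
    also have "\<dots> = real (c * (card (A \<union> D) + 1)) * (\<Sum>\<tau>\<in>orderings A. \<Phi> \<tau>)"
      using c(2)[of \<Phi>] by (simp add: algebra_simps)
    finally show "(\<Sum>\<pi>\<in>orderings (A \<union> insert x D). \<Phi> (filter (\<lambda>x. x \<in> A) \<pi>)) =
       real (c * (card (A \<union> D) + 1)) * (\<Sum>\<tau>\<in>orderings A. \<Phi> \<tau>)" .
  qed
qed

lemma sum_tri:
  fixes a :: "nat \<Rightarrow> real"
  shows "(\<Sum>j\<in>{..K}. \<Sum>i<j. a i) = (\<Sum>i<K. real (K - i) * a i)"
proof (induction K)
  case 0 then show ?case by simp
next
  case (Suc K)
  have e1: "(\<Sum>j\<in>{..Suc K}. \<Sum>i<j. a i) = (\<Sum>i<K. real (K - i) * a i) + (\<Sum>i<K. a i) + a K"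
    using Suc by simp
  have "(\<Sum>i<K. real (Suc K - i) * a i) = (\<Sum>i<K. real (K - i) * a i + a i)"
    by (intro sum.cong) (auto simp: Suc_diff_le algebra_simps)
  also have "\<dots> = (\<Sum>i<K. real (K - i) * a i) + (\<Sum>i<K. a i)" by (simp add: sum.distrib)
  finally have e3: "(\<Sum>i<K. real (Suc K - i) * a i) = (\<Sum>i<K. real (K - i) * a i) + (\<Sum>i<K. a i)" .
  have e2: "(\<Sum>i<Suc K. real (Suc K - i) * a i) = (\<Sum>i<K. real (Suc K - i) * a i) + a K" by simp
  show ?case using e1 e2 e3 by simp
qed

lemma sum_kmi:
  assumes "d \<le> k"
  shows "(\<Sum>i<d. real (k - i)) = real d * real k - real d * (real d - 1) / 2"
  using assms
proof (induction d)
  case 0 then show ?case by simp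
next
  case (Suc d)
  have ih: "(\<Sum>i<d. real (k - i)) = real d * real k - real d * (real d - 1) / 2" using Suc by simp
  have "(\<Sum>i<Suc d. real (k - i)) = (\<Sum>i<d. real (k - i)) + (real k - real d)"
    using Suc.prems by (simp add: of_nat_diff)
  then show ?case using ih by (simp add: field_simps)
qed

lemma sum_split_add: "(\<Sum>i<d+n. (f :: nat \<Rightarrow> 'b::comm_monoid_add) i) = (\<Sum>i<d. f i) + (\<Sum>l<n. f (d+l))"
  by (induction n) (simp_all add: add.assoc)

lemma alg_final:
  fixes x :: "nat \<Rightarrow> real" and M t :: real and d k :: nat
  assumes M: "M > 0" and dk: "d \<le> k"
    and le: "\<And>i. i < k \<Longrightarrow> x i \<le> M"
    and dec: "\<And>i. Suc i < k \<Longrightarrow> x (Suc i) \<le> x i"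
    and s1: "real d * M \<le> (\<Sum>i<d. x i)"
    and s2: "(real d + t) * M \<le> (\<Sum>i<k. x i)"
  shows "M * (real k + 1) * (real d + (t * (real k - real d + 1) - real d * (real d + 1)) / (2 * (real k + 1)))
         \<le> (\<Sum>i<k. real (k - i) * x i)"
proof -
  have xd: "x i = M" if i: "i < d" for i
  proof -
    have "(\<Sum>j<d. x j) = x i + (\<Sum>j\<in>{..<d}-{i}. x j)" using i by (simp add: sum.remove)
    moreover have "(\<Sum>j\<in>{..<d}-{i}. x j) \<le> (\<Sum>j\<in>{..<d}-{i}. M)" using le dk by (intro sum_mono) auto
    moreover have "(\<Sum>j\<in>{..<d}-{i}. M) = (real d - 1) * M" using i by (simp add: of_nat_diff)
    ultimately have "x i \<ge> M" using s1 by (simp add: algebra_simps)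
    moreover have "x i \<le> M" using le[of i] i dk by simp
    ultimately show "x i = M" by simp
  qed
  have sd: "(\<Sum>i<d. x i) = real d * M" using xd by simp
  define n where "n = k - d"
  define y where "y l = x (d + l)" for l
  have kdn: "k = d + n" using dk n_def by simp
  have split: "(\<Sum>i<k. real (k - i) * x i) = (\<Sum>i<d. real (k - i) * x i) + (\<Sum>l<n. real (n - l) * y l)"
    unfolding kdn sum_split_add y_def by simp
  have split2: "(\<Sum>i<k. x i) = (\<Sum>i<d. x i) + (\<Sum>l<n. y l)"
    unfolding kdn sum_split_add y_def by simp
  have Y: "t * M \<le> (\<Sum>l<n. y l)" using s2 split2 sd by (simp add: algebra_simps)
  have ydec: "y j \<le> y i" if "i \<le> j" "j < n" for i j
    using that
  proof (induction j)
    case 0 then show ?case by simp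
  next
    case (Suc j)
    show ?case
    proof (cases "i = Suc j")
      case True then show ?thesis by simp
    next
      case False
      then have "i \<le> j" using Suc by simp
      then have "y j \<le> y i" using Suc by simp
      moreover have "y (Suc j) \<le> y j" unfolding y_def using dec[of "d + j"] Suc kdn by simp
      ultimately show ?thesis by simp
    qed
  qed
  have W: "(\<Sum>l<n. real (n - l)) = real n * (real n + 1) / 2"
    using sum_kmi[of n n] by (simp add: field_simps)
  have cheb: "of_nat n * (\<Sum>l=0..<n. (- y l) * real (n - l)) \<le> (\<Sum>l=0..<n. - y l) * (\<Sum>l=0..<n. real (n - l))"
    by (rule Chebyshev_sum_upper) (use ydec in auto)
  have e1: "(\<Sum>l=0..<n. (- y l) * real (n - l)) = - (\<Sum>l<n. real (n - l) * y l)"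
    unfolding atLeast0LessThan mult_minus_left sum_negf by (simp only: mult.commute)
  have e2: "(\<Sum>l=0..<n. - y l) = - (\<Sum>l<n. y l)" unfolding atLeast0LessThan sum_negf ..
  have e3: "(\<Sum>l=0..<n. real (n - l)) = real n * (real n + 1) / 2" unfolding atLeast0LessThan by (rule W)
  have Wy: "(\<Sum>l<n. real (n - l) * y l) \<ge> (real n + 1) / 2 * (\<Sum>l<n. y l)"
  proof (cases "n = 0")
    case True then show ?thesis by simp
  next
    case False
    have aux: "\<And>(nn::real) S Y. nn > 0 \<Longrightarrow> nn * (- S) \<le> (- Y) * (nn * (nn + 1) / 2) \<Longrightarrow> (nn + 1) / 2 * Y \<le> S"
    proof -
      fix nn S Y :: real assume a: "nn > 0" "nn * (- S) \<le> (- Y) * (nn * (nn + 1) / 2)"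
      then have "nn * ((nn + 1) / 2 * Y) \<le> nn * S" by (simp add: algebra_simps)
      then show "(nn + 1) / 2 * Y \<le> S" using a(1) by simp
    qed
    have h: "real n * (- (\<Sum>l<n. real (n - l) * y l)) \<le> (- (\<Sum>l<n. y l)) * (real n * (real n + 1) / 2)"
      using cheb unfolding e1 e2 e3 .
    show ?thesis by (rule aux[OF _ h]) (use False in simp)
  qed
  have Wy2: "(\<Sum>l<n. real (n - l) * y l) \<ge> (real n + 1) / 2 * (t * M)"
    by (rule order_trans[OF _ Wy]) (rule mult_left_mono[OF Y]; simp)
  have first: "(\<Sum>i<d. real (k - i) * x i) = M * (real d * real k - real d * (real d - 1) / 2)"
  proof -
    have "(\<Sum>i<d. real (k - i) * x i) = (\<Sum>i<d. M * real (k - i))" using xd by (intro sum.cong) auto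
    also have "\<dots> = M * (\<Sum>i<d. real (k - i))" by (rule sum_distrib_left[symmetric])
    finally show ?thesis unfolding sum_kmi[OF dk] .
  qed
  have rn: "real n = real k - real d" using kdn by simp
  have lhs: "M * (real k + 1) * (real d + (t * (real k - real d + 1) - real d * (real d + 1)) / (2 * (real k + 1)))
     = M * (real d * real k - real d * (real d - 1) / 2) + (real n + 1) / 2 * (t * M)"
    unfolding rn by (simp add: field_simps)
  show ?thesis unfolding lhs split first using Wy2 by linarith
qed

lemma comb_core:
  fixes \<Psi> :: "'a set \<Rightarrow> real" and Nv :: "'a set" and d :: nat and t :: real
  assumes fin: "finite Nv" and empty: "\<Psi> {} = 0"
    and inc1: "\<And>T a. T \<subseteq> Nv \<Longrightarrow> a \<in> Nv \<Longrightarrow> \<Psi> (insert a T) \<le> \<Psi> T + 1"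
    and submod: "\<And>T a b. T \<subseteq> Nv \<Longrightarrow> a \<in> Nv \<Longrightarrow> b \<in> Nv \<Longrightarrow>
        \<Psi> (insert a (insert b T)) + \<Psi> T \<le> \<Psi> (insert a T) + \<Psi> (insert b T)"
    and lowb: "\<And>U. U \<subseteq> Nv \<Longrightarrow> card U \<le> d \<Longrightarrow> real (card U) \<le> \<Psi> U"
    and top: "real d + t \<le> \<Psi> Nv" and t0: "t \<ge> 0"
  shows "real (card (orderings Nv)) * (real (card Nv) + 1) *
           (real d + (t * (real (card Nv) - real d + 1) - real d * (real d + 1)) / (2 * (real (card Nv) + 1)))
         \<le> (\<Sum>\<sigma>\<in>orderings Nv. \<Sum>j\<in>{..card Nv}. \<Psi> (set (take j \<sigma>)))"
proof -
  define k where "k = card Nv"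
  define Os where "Os = orderings Nv"
  define M where "M = real (card Os)"
  define \<delta> where "\<delta> i \<sigma> = \<Psi> (set (take (Suc i) \<sigma>)) - \<Psi> (set (take i \<sigma>))" for i \<sigma>
  define D where "D i = (\<Sum>\<sigma>\<in>Os. \<delta> i \<sigma>)" for i
  have finO: "finite Os" unfolding Os_def using finite_orderings[OF fin] .
  have neO: "Os \<noteq> {}" unfolding Os_def using orderings_nonempty[OF fin] .
  have Mpos: "M > 0" unfolding M_def using finO neO by (simp add: card_gt_0_iff)
  have len: "length \<sigma> = k" if "\<sigma> \<in> Os" for \<sigma> using that orderings_length unfolding Os_def k_def by blast
  have ds: "distinct \<sigma>" "set \<sigma> = Nv" if "\<sigma> \<in> Os" for \<sigma> using that unfolding Os_def orderings_def by auto
  have tele: "\<Psi> (set (take j \<sigma>)) = (\<Sum>i<j. \<delta> i \<sigma>)" for j \<sigma>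
    unfolding \<delta>_def by (subst sum_lessThan_telescope) (simp add: empty)
  have tk: "set (take (Suc i) \<sigma>) = insert (\<sigma> ! i) (set (take i \<sigma>))" if "\<sigma> \<in> Os" "i < k" for \<sigma> i
    using that len by (simp add: take_Suc_conv_app_nth)
  have sub: "set (take i \<sigma>) \<subseteq> Nv" if "\<sigma> \<in> Os" for \<sigma> i
    using set_take_subset[of i \<sigma>] ds(2)[OF that] by simp
  have mem: "\<sigma> ! i \<in> Nv" if "\<sigma> \<in> Os" "i < k" for \<sigma> i
    using nth_mem[of i \<sigma>] len[OF that(1)] ds(2)[OF that(1)] that(2) by simp
  have dle: "\<delta> i \<sigma> \<le> 1" if "\<sigma> \<in> Os" "i < k" for \<sigma> i
    using inc1[OF sub[OF that(1), of i] mem[OF that]] tk[OF that] unfolding \<delta>_def by simp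
  have total: "(\<Sum>\<sigma>\<in>Os. \<Sum>j\<in>{..k}. \<Psi> (set (take j \<sigma>))) = (\<Sum>i<k. real (k - i) * D i)"
  proof -
    have "(\<Sum>\<sigma>\<in>Os. \<Sum>j\<in>{..k}. \<Psi> (set (take j \<sigma>))) = (\<Sum>\<sigma>\<in>Os. \<Sum>i<k. real (k - i) * \<delta> i \<sigma>)"
      unfolding tele sum_tri ..
    also have "\<dots> = (\<Sum>i<k. \<Sum>\<sigma>\<in>Os. real (k - i) * \<delta> i \<sigma>)" by (rule sum.swap)
    also have "\<dots> = (\<Sum>i<k. real (k - i) * D i)" unfolding D_def by (simp add: sum_distrib_left)
    finally show ?thesis .
  qed
  have D1: "D i \<le> M" if "i < k" for i
  proof -
    have "D i \<le> (\<Sum>\<sigma>\<in>Os. 1)" unfolding D_def using dle that by (intro sum_mono) auto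
    then show ?thesis unfolding M_def by simp
  qed
  have prefix: "(\<Sum>i<j. D i) = (\<Sum>\<sigma>\<in>Os. \<Psi> (set (take j \<sigma>)))" for j
    unfolding D_def tele by (rule sum.swap)
  have Nk: "\<Psi> Nv \<le> real k"
  proof -
    obtain \<sigma> where s: "\<sigma> \<in> Os" using neO by blast
    have "\<Psi> Nv = \<Psi> (set (take k \<sigma>))" using s len ds by simp
    also have "\<dots> = (\<Sum>i<k. \<delta> i \<sigma>)" by (rule tele)
    also have "\<dots> \<le> (\<Sum>i<k. 1)" using dle[OF s] by (intro sum_mono) auto
    finally show ?thesis by simp
  qed
  have dk: "d \<le> k" using Nk top t0 by linarith
  have D3: "real d * M \<le> (\<Sum>i<d. D i)"
  proof -
    have "\<And>\<sigma>. \<sigma> \<in> Os \<Longrightarrow> real d \<le> \<Psi> (set (take d \<sigma>))"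
    proof -
      fix \<sigma> assume s: "\<sigma> \<in> Os"
      have "card (set (take d \<sigma>)) = d" using s ds len dk by (simp add: distinct_card)
      then show "real d \<le> \<Psi> (set (take d \<sigma>))" using lowb[OF sub[OF s, of d]] by simp
    qed
    then have "(\<Sum>\<sigma>\<in>Os. real d) \<le> (\<Sum>\<sigma>\<in>Os. \<Psi> (set (take d \<sigma>)))" by (intro sum_mono) auto
    then show ?thesis unfolding prefix M_def by (simp add: mult.commute)
  qed
  have D4: "(real d + t) * M \<le> (\<Sum>i<k. D i)"
  proof -
    have "(\<Sum>\<sigma>\<in>Os. \<Psi> (set (take k \<sigma>))) = (\<Sum>\<sigma>\<in>Os. \<Psi> Nv)"
      using ds len by (intro sum.cong) auto
    then have "(\<Sum>i<k. D i) = M * \<Psi> Nv" unfolding prefix M_def by simp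
    then show ?thesis using top Mpos by (simp add: mult.commute mult_right_mono)
  qed
  have D2: "D (Suc i) \<le> D i" if i: "Suc i < k" for i
  proof -
    define sw where "sw \<sigma> = \<sigma>[i := \<sigma> ! Suc i, Suc i := \<sigma> ! i]" for \<sigma> :: "'a list"
    have swO: "sw \<sigma> \<in> Os" if "\<sigma> \<in> Os" for \<sigma>
      using that len[OF that] ds[OF that] i unfolding sw_def Os_def orderings_def by simp
    have swsw: "sw (sw \<sigma>) = \<sigma>" if "\<sigma> \<in> Os" for \<sigma>
      using len[OF that] i unfolding sw_def by (simp add: list_eq_iff_nth_eq nth_list_update)
    have bij: "bij_betw sw Os Os"
      by (rule bij_betw_byWitness[where f'=sw]) (use swO swsw in auto)
    have Di: "D i = (\<Sum>\<sigma>\<in>Os. \<delta> i (sw \<sigma>))"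
      unfolding D_def using sum.reindex_bij_betw[OF bij, of "\<delta> i"] by simp
    have pw: "\<delta> (Suc i) \<sigma> \<le> \<delta> i (sw \<sigma>)" if s: "\<sigma> \<in> Os" for \<sigma>
    proof -
      define T where "T = set (take i \<sigma>)"
      define a where "a = \<sigma> ! i"
      define b where "b = \<sigma> ! Suc i"
      have l: "length \<sigma> = k" using len[OF s] .
      have t1: "set (take (Suc i) \<sigma>) = insert a T" unfolding a_def T_def using tk[OF s] i by simp
      have t2: "set (take (Suc (Suc i)) \<sigma>) = insert b (insert a T)"
        unfolding b_def using tk[OF s, of "Suc i"] i t1 by simp
      have t3: "take i (sw \<sigma>) = take i \<sigma>" unfolding sw_def by simp
      have t4: "sw \<sigma> ! i = b" unfolding sw_def b_def using l i by (simp add: nth_list_update)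
      have t5: "set (take (Suc i) (sw \<sigma>)) = insert b T"
        using tk[OF swO[OF s], of i] i t3 t4 unfolding T_def by simp
      have "T \<subseteq> Nv" unfolding T_def using sub[OF s] .
      moreover have "a \<in> Nv" "b \<in> Nv" unfolding a_def b_def using mem[OF s] i by auto
      ultimately have "\<Psi> (insert b (insert a T)) + \<Psi> T \<le> \<Psi> (insert b T) + \<Psi> (insert a T)"
        using submod by blast
      then show ?thesis unfolding \<delta>_def t1 t2 t5 t3 T_def[symmetric] by simp
    qed
    show ?thesis unfolding Di unfolding D_def using pw by (intro sum_mono) auto
  qed
  have "M * (real k + 1) * (real d + (t * (real k - real d + 1) - real d * (real d + 1)) / (2 * (real k + 1)))
         \<le> (\<Sum>\<sigma>\<in>Os. \<Sum>j\<in>{..k}. \<Psi> (set (take j \<sigma>)))"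
    unfolding total by (rule alg_final[OF Mpos dk D1 D2 D3 D4])
  then show ?thesis unfolding M_def Os_def k_def .
qed

lemma prec_filter:
  assumes "distinct \<pi>" "v \<in> set \<pi>" "v \<in> A" "Nv \<subseteq> A"
  shows "preceding (filter (\<lambda>x. x \<in> A) \<pi>) v \<inter> Nv = preceding \<pi> v \<inter> Nv"
proof -
  obtain xs ys where p: "\<pi> = xs @ v # ys" using split_list_first[OF assms(2)] by blast
  have d: "distinct (xs @ v # ys)" using assms(1) p by simp
  have f: "filter (\<lambda>x. x \<in> A) \<pi> = filter (\<lambda>x. x \<in> A) xs @ v # filter (\<lambda>x. x \<in> A) ys"
    using p assms(3) by simp
  have "distinct (filter (\<lambda>x. x \<in> A) \<pi>)" using assms(1) by simp
  then have d2: "distinct (filter (\<lambda>x. x \<in> A) xs @ v # filter (\<lambda>x. x \<in> A) ys)" unfolding f .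
  have e1: "preceding (filter (\<lambda>x. x \<in> A) \<pi>) v = set (filter (\<lambda>x. x \<in> A) xs)"
    unfolding f by (rule preceding_split[OF d2])
  have e2: "preceding \<pi> v = set xs" unfolding p by (rule preceding_split[OF d])
  show ?thesis unfolding e1 e2 using assms(4) by auto
qed

lemma comb_main:
  fixes \<Psi> :: "'a set \<Rightarrow> real" and V Nv :: "'a set" and v :: 'a and d :: nat and t :: real
  assumes finV: "finite V" and vV: "v \<in> V" and NvV: "Nv \<subseteq> V" and vN: "v \<notin> Nv"
    and restr: "\<And>U. \<Psi> U = \<Psi> (U \<inter> Nv)"
    and empty: "\<Psi> {} = 0"
    and inc1: "\<And>T a. T \<subseteq> Nv \<Longrightarrow> a \<in> Nv \<Longrightarrow> \<Psi> (insert a T) \<le> \<Psi> T + 1"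
    and submod: "\<And>T a b. T \<subseteq> Nv \<Longrightarrow> a \<in> Nv \<Longrightarrow> b \<in> Nv \<Longrightarrow>
        \<Psi> (insert a (insert b T)) + \<Psi> T \<le> \<Psi> (insert a T) + \<Psi> (insert b T)"
    and lowb: "\<And>U. U \<subseteq> Nv \<Longrightarrow> card U \<le> d \<Longrightarrow> real (card U) \<le> \<Psi> U"
    and top: "real d + t \<le> \<Psi> Nv" and t0: "t \<ge> 0"
  shows "real d + (t * (real (card Nv) - real d + 1) - real d * (real d + 1)) / (2 * (real (card Nv) + 1))
     \<le> (\<Sum>\<pi>\<in>orderings V. \<Psi> (preceding \<pi> v)) / real (card (orderings V))"
proof -
  define A where "A = insert v Nv"
  have finN: "finite Nv" using finV NvV finite_subset by blast
  have finA: "finite A" unfolding A_def using finN by simp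
  have AV: "A \<union> (V - A) = V" using vV NvV unfolding A_def by auto
  obtain c where c: "c > 0" "\<And>\<Phi>::'a list \<Rightarrow> real. (\<Sum>\<pi>\<in>orderings (A \<union> (V - A)). \<Phi> (filter (\<lambda>x. x \<in> A) \<pi>))
      = real c * (\<Sum>\<tau>\<in>orderings A. \<Phi> \<tau>)"
    using filter_reduce[of "V - A" A] finV finA by auto
  have S1: "(\<Sum>\<pi>\<in>orderings V. \<Psi> (preceding \<pi> v)) = real c * (\<Sum>\<tau>\<in>orderings A. \<Psi> (preceding \<tau> v))"
  proof -
    have "(\<Sum>\<pi>\<in>orderings V. \<Psi> (preceding \<pi> v)) = (\<Sum>\<pi>\<in>orderings V. \<Psi> (preceding (filter (\<lambda>x. x \<in> A) \<pi>) v))"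
    proof (rule sum.cong[OF refl])
      fix \<pi> assume "\<pi> \<in> orderings V"
      then have "distinct \<pi>" "v \<in> set \<pi>" using vV unfolding orderings_def by auto
      then have "preceding (filter (\<lambda>x. x \<in> A) \<pi>) v \<inter> Nv = preceding \<pi> v \<inter> Nv"
        by (rule prec_filter) (auto simp: A_def)
      then show "\<Psi> (preceding \<pi> v) = \<Psi> (preceding (filter (\<lambda>x. x \<in> A) \<pi>) v)" using restr by metis
    qed
    also have "\<dots> = real c * (\<Sum>\<tau>\<in>orderings A. \<Psi> (preceding \<tau> v))"
      using c(2)[of "\<lambda>\<tau>. \<Psi> (preceding \<tau> v)"] unfolding AV .
    finally show ?thesis .
  qed
  have C1: "real (card (orderings V)) = real c * real (card (orderings A))"
    using c(2)[of "\<lambda>_. 1"] unfolding AV by simp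
  have S2: "(\<Sum>\<tau>\<in>orderings A. \<Psi> (preceding \<tau> v)) = (\<Sum>\<sigma>\<in>orderings Nv. \<Sum>j\<in>{..card Nv}. \<Psi> (set (take j \<sigma>)))"
  proof -
    have "(\<Sum>\<tau>\<in>orderings A. \<Psi> (preceding \<tau> v)) =
      (\<Sum>\<sigma>\<in>orderings Nv. \<Sum>j\<in>{..card Nv}. \<Psi> (preceding (take j \<sigma> @ v # drop j \<sigma>) v))"
      unfolding A_def by (rule sum_ins[OF vN])
    also have "\<dots> = (\<Sum>\<sigma>\<in>orderings Nv. \<Sum>j\<in>{..card Nv}. \<Psi> (set (take j \<sigma>)))"
    proof (rule sum.cong[OF refl], rule sum.cong[OF refl])
      fix \<sigma> j assume s: "\<sigma> \<in> orderings Nv" and j: "j \<in> {..card Nv}"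
      have "(\<lambda>(\<sigma>, j). take j \<sigma> @ v # drop j \<sigma>) (\<sigma>, j) \<in> orderings (insert v Nv)"
        using bij_betwE[OF ins_bij[OF vN]] s j by blast
      then have "distinct (take j \<sigma> @ v # drop j \<sigma>)" unfolding orderings_def by simp
      then show "\<Psi> (preceding (take j \<sigma> @ v # drop j \<sigma>) v) = \<Psi> (set (take j \<sigma>))"
        by (simp add: preceding_split)
    qed
    finally show ?thesis .
  qed
  have C2: "real (card (orderings A)) = real (card (orderings Nv)) * (real (card Nv) + 1)"
    using sum_ins[OF vN, of "\<lambda>_. (1::real)"] unfolding A_def by simp
  have Mpos: "real (card (orderings Nv)) > 0"
    using finite_orderings[OF finN] orderings_nonempty[OF finN] by (simp add: card_gt_0_iff)
  have core: "real (card (orderings Nv)) * (real (card Nv) + 1) *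
           (real d + (t * (real (card Nv) - real d + 1) - real d * (real d + 1)) / (2 * (real (card Nv) + 1)))
         \<le> (\<Sum>\<sigma>\<in>orderings Nv. \<Sum>j\<in>{..card Nv}. \<Psi> (set (take j \<sigma>)))"
    by (rule comb_core[OF finN empty inc1 submod lowb top t0])
  have cpos: "real c > 0" using c(1) by simp
  have eq: "(\<Sum>\<pi>\<in>orderings V. \<Psi> (preceding \<pi> v)) / real (card (orderings V))
     = (\<Sum>\<sigma>\<in>orderings Nv. \<Sum>j\<in>{..card Nv}. \<Psi> (set (take j \<sigma>))) / (real (card (orderings Nv)) * (real (card Nv) + 1))"
    unfolding S1 S2 C1 C2 using cpos by simp
  have pos: "real (card (orderings Nv)) * (real (card Nv) + 1) > 0" using Mpos by simp
  show ?thesis unfolding eq using core pos by (simp add: pos_le_divide_eq mult.commute)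
qed



interpretation fvs: vector_space "\<lambda>(r::real) (f::'b \<Rightarrow> real) x. r * f x"
  by unfold_locales (auto simp: fun_eq_iff algebra_simps)

lemma sum_fun_apply: "(sum f S) x = (\<Sum>a\<in>S. f a x)"
  by (induction S rule: infinite_finite_induct) auto

lemma fvs_dim_insert:
  assumes "finite S"
  shows "fvs.dim (insert x S) = (if x \<in> fvs.span S then fvs.dim S else fvs.dim S + 1)"
proof (cases "x \<in> fvs.span S")
  case True then show ?thesis
    using fvs.span_eq_dim[OF fvs.span_redundant[OF True]] by simp
next
  case False
  obtain B where B: "B \<subseteq> fvs.span S" "fvs.independent B" "fvs.span S \<subseteq> fvs.span B" "card B = fvs.dim (fvs.span S)"
    using fvs.basis_exists [of "fvs.span S"] by blast
  have finB: "finite B" using fvs.independent_span_bound[OF assms B(2)] B(1) by blast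
  have spB: "fvs.span B \<subseteq> fvs.span S"
    using fvs.span_minimal[OF B(1) fvs.subspace_span] .
  have xB: "x \<notin> fvs.span B" using spB False by blast
  have "fvs.dim (fvs.span (insert x S)) = Suc (fvs.dim S)"
  proof (rule fvs.dim_unique)
    show "insert x B \<subseteq> fvs.span (insert x S)"
      using B(1) fvs.span_mono[of S "insert x S"] fvs.span_base[of x "insert x S"] by auto
    have "insert x S \<subseteq> fvs.span (insert x B)"
      using fvs.span_base[of x "insert x B"] fvs.span_base[of _ S] B(3) fvs.span_mono[of B "insert x B"] by auto
    then show "fvs.span (insert x S) \<subseteq> fvs.span (insert x B)"
      using fvs.span_minimal[OF _ fvs.subspace_span] by blast
    show "fvs.independent (insert x B)"
      by (rule fvs.independent_insertI[OF xB B(2)])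
    have "x \<notin> B" using xB fvs.span_base by blast
    then show "card (insert x B) = Suc (fvs.dim S)"
      using B(4) finB by simp
  qed
  then show ?thesis using False by simp
qed

lemma fvs_dim_insert_le:
  assumes "finite S" shows "fvs.dim (insert x S) \<le> fvs.dim S + 1"
  using fvs_dim_insert[OF assms, of x] by simp

lemma fvs_dim_submod:
  assumes "finite S"
  shows "fvs.dim (insert b (insert a S)) + fvs.dim S \<le> fvs.dim (insert b S) + fvs.dim (insert a S)"
proof (cases "b \<in> fvs.span (insert a S)")
  case True
  then have "fvs.dim (insert b (insert a S)) = fvs.dim (insert a S)"
    using fvs_dim_insert[of "insert a S" b] assms by simp
  moreover have "fvs.dim S \<le> fvs.dim (insert b S)" using fvs_dim_insert[OF assms, of b] by simp
  ultimately show ?thesis by simp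
next
  case False
  then have "b \<notin> fvs.span S" using fvs.span_mono[of S "insert a S"] by blast
  then show ?thesis using False fvs_dim_insert[OF assms, of b] fvs_dim_insert[of "insert a S" b] assms by simp
qed

definition rowv :: "nat \<Rightarrow> ('a \<Rightarrow> nat \<Rightarrow> real) \<Rightarrow> 'a set \<Rightarrow> ('a \<times> nat \<Rightarrow> real)" where
  "rowv d p e = (\<lambda>(w, i). if i < d then rig_row p e w i else 0)"

lemma rows_indep_iff:
  assumes "finite F"
  shows "rows_indep d p F \<longleftrightarrow> inj_on (rowv d p) F \<and> fvs.independent (rowv d p ` F)"
proof
  assume ri: "rows_indep d p F"
  have key: "\<And>c. (\<Sum>e\<in>F. (\<lambda>x. c e * rowv d p e x)) = 0 \<Longrightarrow> \<forall>e\<in>F. c e = 0"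
  proof -
    fix c assume h: "(\<Sum>e\<in>F. (\<lambda>x. c e * rowv d p e x)) = 0"
    have "\<And>w i. (\<Sum>e\<in>F. c e * rowv d p e (w, i)) = 0"
    proof -
      fix w i
      have "(\<Sum>e\<in>F. (\<lambda>x. c e * rowv d p e x)) (w, i) = (0::'a \<times> nat \<Rightarrow> real) (w, i)" by (simp only: h)
      then show "(\<Sum>e\<in>F. c e * rowv d p e (w, i)) = 0" by (simp add: sum_fun_apply)
    qed
    note hh = this
    have "\<And>w i. i < d \<Longrightarrow> (\<Sum>e\<in>F. c e * rig_row p e w i) = 0"
    proof -
      fix w i assume "i < d"
      then show "(\<Sum>e\<in>F. c e * rig_row p e w i) = 0" using hh[of w i] by (simp add: rowv_def)
    qed
    then show "\<forall>e\<in>F. c e = 0" using ri unfolding rows_indep_def by blast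
  qed
  have inj: "inj_on (rowv d p) F"
  proof (rule inj_onI, rule ccontr)
    fix e f assume ef: "e \<in> F" "f \<in> F" "rowv d p e = rowv d p f" "e \<noteq> f"
    define c where "c x = (if x = e then 1 else if x = f then -1 else (0::real))" for x
    have "(\<Sum>x\<in>F. (\<lambda>y. c x * rowv d p x y)) = (\<lambda>y. c e * rowv d p e y) + (\<Sum>x\<in>F - {e}. (\<lambda>y. c x * rowv d p x y))"
      using ef assms by (simp add: sum.remove)
    also have "(\<Sum>x\<in>F - {e}. (\<lambda>y. c x * rowv d p x y)) = (\<lambda>y. c f * rowv d p f y) + (\<Sum>x\<in>F - {e} - {f}. (\<lambda>y. c x * rowv d p x y))"
      by (rule sum.remove) (use ef assms in auto)
    also have "(\<Sum>x\<in>F - {e} - {f}. (\<lambda>y. c x * rowv d p x y)) = 0"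
      by (rule sum.neutral) (auto simp: c_def fun_eq_iff)
    finally have "(\<Sum>x\<in>F. (\<lambda>y. c x * rowv d p x y)) = 0"
      using ef by (simp add: c_def fun_eq_iff)
    then have "c e = 0" using key ef by blast
    then show False by (simp add: c_def)
  qed
  have "\<not> fvs.dependent (rowv d p ` F)"
  proof
    assume "fvs.dependent (rowv d p ` F)"
    moreover have fin': "finite (rowv d p ` F)" using assms by simp
    ultimately obtain u where u: "\<exists>v\<in>rowv d p ` F. u v \<noteq> 0" "(\<Sum>v\<in>rowv d p ` F. (\<lambda>x. u v * v x)) = 0"
      using fvs.dependent_finite[OF fin', THEN iffD1] by blast
    have "(\<Sum>v\<in>rowv d p ` F. (\<lambda>x. u v * v x)) = (\<Sum>e\<in>F. (\<lambda>x. u (rowv d p e) * rowv d p e x))"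
      by (subst sum.reindex[OF inj]) (simp only: comp_def)
    then have "(\<Sum>e\<in>F. (\<lambda>x. u (rowv d p e) * rowv d p e x)) = 0" using u(2) by simp
    then have "\<forall>e\<in>F. u (rowv d p e) = 0" by (rule key)
    then show False using u(1) by auto
  qed
  then show "inj_on (rowv d p) F \<and> fvs.independent (rowv d p ` F)" using inj by simp
next
  assume a: "inj_on (rowv d p) F \<and> fvs.independent (rowv d p ` F)"
  show "rows_indep d p F" unfolding rows_indep_def
  proof (intro conjI assms allI impI)
    fix c :: "'a set \<Rightarrow> real"
    assume z: "\<forall>w i. i < d \<longrightarrow> (\<Sum>e\<in>F. c e * rig_row p e w i) = 0"
    define u where "u v = c (the_inv_into F (rowv d p) v)" for v
    have ue: "u (rowv d p e) = c e" if "e \<in> F" for e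
      unfolding u_def by (simp add: the_inv_into_f_f[OF conjunct1[OF a] that])
    have "(\<Sum>v\<in>rowv d p ` F. (\<lambda>x. u v * v x)) = (\<Sum>e\<in>F. (\<lambda>x. u (rowv d p e) * rowv d p e x))"
      by (subst sum.reindex[OF conjunct1[OF a]]) (simp only: comp_def)
    also have "\<dots> = (\<Sum>e\<in>F. (\<lambda>x. c e * rowv d p e x))" using ue by (intro sum.cong) auto
    also have "\<dots> = 0"
    proof (rule ext)
      fix x :: "'a \<times> nat"
      obtain w i where x: "x = (w, i)" by fastforce
      show "(\<Sum>e\<in>F. (\<lambda>x. c e * rowv d p e x)) x = 0 x"
        unfolding sum_fun_apply x using z by (cases "i < d") (auto simp: rowv_def)
    qed
    finally have "(\<Sum>v\<in>rowv d p ` F. (\<lambda>x. u v * v x)) = 0" .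
    moreover have fin': "finite (rowv d p ` F)" using assms by simp
    moreover have "\<not> (\<exists>u. (\<exists>v\<in>rowv d p ` F. u v \<noteq> 0) \<and> (\<Sum>v\<in>rowv d p ` F. (\<lambda>x. u v * v x)) = 0)"
      using conjunct2[OF a] fvs.dependent_finite[OF fin'] by simp
    ultimately have "\<forall>v\<in>rowv d p ` F. u v = 0" by blast
    then show "\<forall>e\<in>F. c e = 0" using ue by auto
  qed
qed

lemma rows_indep_empty: "rows_indep d p {}"
  unfolding rows_indep_def by simp

lemma rank_attained:
  assumes "finite X"
  shows "\<exists>F\<subseteq>X. rig_indep d F \<and> card F = rig_rank d X"
proof -
  let ?S = "card ` {F. F \<subseteq> X \<and> rig_indep d F}"
  have "finite ?S" using assms by simp
  moreover have "rig_indep d {}" unfolding rig_indep_def using rows_indep_empty by (rule exI)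
  then have "{} \<in> {F. F \<subseteq> X \<and> rig_indep d F}" by simp
  then have "?S \<noteq> {}" by blast
  ultimately have "Max ?S \<in> ?S" by (rule Max_in)
  then obtain F where "F \<in> {F. F \<subseteq> X \<and> rig_indep d F}" "Max ?S = card F" by (auto simp only: image_iff)
  then show ?thesis unfolding rig_rank_def by auto
qed

lemma rank_ge:
  assumes "finite X" "F \<subseteq> X" "rig_indep d F"
  shows "card F \<le> rig_rank d X"
  unfolding rig_rank_def
proof (rule Max_ge)
  show "finite (card ` {F. F \<subseteq> X \<and> rig_indep d F})" using assms(1) by simp
  show "card F \<in> card ` {F. F \<subseteq> X \<and> rig_indep d F}" using assms(2,3) by simp
qed

lemma rank_dim:
  assumes fin: "finite E0" and gen: "\<And>F. F \<subseteq> E0 \<Longrightarrow> rig_indep d F \<Longrightarrow> rows_indep d p F"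
    and X: "X \<subseteq> E0"
  shows "rig_rank d X = fvs.dim (rowv d p ` X)"
proof (rule antisym)
  have finX: "finite X" using fin X finite_subset by blast
  obtain B where B: "B \<subseteq> rowv d p ` X" "fvs.independent B" "rowv d p ` X \<subseteq> fvs.span B"
      "card B = fvs.dim (rowv d p ` X)"
    by (rule fvs.basis_exists)
  have finB: "finite B" using B(1) finX finite_subset by blast
  obtain F where F: "F \<subseteq> X" "inj_on (rowv d p) F" "B = rowv d p ` F"
    using subset_image_inj[THEN iffD1, OF B(1)] by blast
  have finF: "finite F" using F(1) finX finite_subset by blast
  have "rows_indep d p F" using rows_indep_iff[OF finF] F B(2) by simp
  then have "rig_indep d F" unfolding rig_indep_def by blast
  then have "card F \<le> rig_rank d X" by (rule rank_ge[OF finX F(1)])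
  moreover have "card F = card B" using F(3) card_image[OF F(2)] by simp
  ultimately show "fvs.dim (rowv d p ` X) \<le> rig_rank d X" using B(4) by simp
  obtain G where G: "G \<subseteq> X" "rig_indep d G" "card G = rig_rank d X"
    using rank_attained[OF finX] by blast
  have finG: "finite G" using G(1) finX finite_subset by blast
  have "rows_indep d p G" using gen[OF order_trans[OF G(1) X] G(2)] .
  then have Gi: "inj_on (rowv d p) G" "fvs.independent (rowv d p ` G)"
    using rows_indep_iff[OF finG] by auto
  have "rowv d p ` G \<subseteq> fvs.span B" using B(3) G(1) by auto
  then have "card (rowv d p ` G) \<le> card B"
    using fvs.independent_span_bound[OF finB Gi(2)] by simp
  then show "rig_rank d X \<le> fvs.dim (rowv d p ` X)" using G(3) B(4) card_image[OF Gi(1)] by simp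
qed



definition rowm :: "'a set \<Rightarrow> ('a \<Rightarrow> nat \<Rightarrow> real) \<Rightarrow> 'a set \<Rightarrow> 'a \<Rightarrow> nat \<Rightarrow> real" where
  "rowm W p e w i = (if w \<in> W then rig_row p e w i else 0)"

definition indepm :: "'a set \<Rightarrow> nat \<Rightarrow> ('a \<Rightarrow> nat \<Rightarrow> real) \<Rightarrow> 'a set set \<Rightarrow> bool" where
  "indepm W d p F \<longleftrightarrow> finite F \<and> (\<forall>c::'a set \<Rightarrow> real.
     (\<forall>w i. i < d \<longrightarrow> (\<Sum>e\<in>F. c e * rowm W p e w i) = 0) \<longrightarrow> (\<forall>e\<in>F. c e = 0))"

lemma indepm_UNIV: "indepm UNIV d p F = rows_indep d p F"
  unfolding indepm_def rows_indep_def rowm_def by simp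

lemma rig_row_lin: "rig_row (\<lambda>w i. p w i + s * q w i) e w i = rig_row p e w i + s * rig_row q e w i"
  unfolding rig_row_def by (simp add: algebra_simps)

lemma rig_row_out: "w \<notin> e \<Longrightarrow> rig_row p e w i = 0"
  unfolding rig_row_def by simp

lemma sum_nth_conv:
  assumes "distinct es"
  shows "(\<Sum>e\<in>set es. g e) = (\<Sum>a<length es. g (es ! a))"
  using sum.reindex_bij_betw[OF bij_betw_nth[OF assms refl refl], of g] by simp

lemma finite_bad:
  assumes finF: "finite F" and fine: "\<And>e. e \<in> F \<Longrightarrow> finite e"
    and good: "indepm W d (\<lambda>w i. p w i + s0 * q w i) F"
  shows "finite {s. \<not> indepm W d (\<lambda>w i. p w i + s * q w i) F}"
proof -
  obtain es where es: "distinct es" "set es = F" using finite_distinct_list[OF finF] by blast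
  define m where "m = length es"
  define Xc where "Xc = (\<Union>F) \<times> {..<d}"
  have finXc: "finite Xc" using finF fine unfolding Xc_def by auto
  define \<alpha> where "\<alpha> a x = rowm W p (es ! a) (fst x) (snd x)" for a x
  define \<beta> where "\<beta> a x = rowm W q (es ! a) (fst x) (snd x)" for a x
  define r where "r s a x = \<alpha> a x + s * \<beta> a x" for s :: real and a x
  define P where "P s = (\<lambda>w i. p w i + s * q w i)" for s :: real
  have r_eq: "rowm W (P s) (es ! a) w i = r s a (w, i)" for s a w i
    unfolding r_def \<alpha>_def \<beta>_def rowm_def P_def by (simp add: rig_row_lin)
  have sumF: "(\<Sum>e\<in>F. g e) = (\<Sum>a<m. g (es ! a))" for g :: "'a set \<Rightarrow> real"
    unfolding m_def es(2)[symmetric] by (rule sum_nth_conv[OF es(1)])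
  define G where "G s = mat m m (\<lambda>(a, b). \<Sum>x\<in>Xc. r s a x * r s b x)" for s
  define Q where "Q = mat m m (\<lambda>(a, b). \<Sum>x\<in>Xc. [:\<alpha> a x, \<beta> a x:] * [:\<alpha> b x, \<beta> b x:])"
  have GQ: "G s = map_mat (\<lambda>f. poly f s) Q" for s
    unfolding G_def Q_def r_def by (rule eq_matI) (auto simp: poly_sum algebra_simps intro!: sum.cong)
  have detG: "det (G s) = poly (det Q) s" for s
  proof -
    interpret ev: comm_ring_hom "\<lambda>f. poly f s" by unfold_locales (auto simp: poly_mult)
    show ?thesis unfolding GQ by (rule ev.hom_det)
  qed
  have Gc: "G s \<in> carrier_mat m m" for s unfolding G_def by simp
  have K2: "indepm W d (P s) F" if dz: "det (G s) \<noteq> 0" for s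
    unfolding indepm_def
  proof (intro conjI finF allI impI)
    fix c :: "'a set \<Rightarrow> real"
    assume z: "\<forall>w i. i < d \<longrightarrow> (\<Sum>e\<in>F. c e * rowm W (P s) e w i) = 0"
    define v where "v = vec m (\<lambda>a. c (es ! a))"
    have zz: "(\<Sum>b<m. r s b x * c (es ! b)) = 0" if x: "x \<in> Xc" for x
    proof -
      obtain w i where wi: "x = (w, i)" "i < d" using x unfolding Xc_def by auto
      have "(\<Sum>e\<in>F. c e * rowm W (P s) e w i) = 0" using z wi by blast
      then show ?thesis unfolding sumF r_eq wi by (simp add: mult.commute)
    qed
    have "G s *\<^sub>v v = 0\<^sub>v m"
    proof (rule eq_vecI)
      show "dim_vec (G s *\<^sub>v v) = dim_vec (0\<^sub>v m)" unfolding G_def by simp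
      fix a assume "a < dim_vec (0\<^sub>v m)"
      then have a: "a < m" by simp
      have "(G s *\<^sub>v v) $ a = (\<Sum>b<m. (\<Sum>x\<in>Xc. r s a x * r s b x) * c (es ! b))"
        using a unfolding G_def v_def by (simp add: scalar_prod_def atLeast0LessThan)
      also have "\<dots> = (\<Sum>b<m. \<Sum>x\<in>Xc. r s a x * (r s b x * c (es ! b)))"
        by (simp add: sum_distrib_right mult.assoc)
      also have "\<dots> = (\<Sum>x\<in>Xc. \<Sum>b<m. r s a x * (r s b x * c (es ! b)))" by (rule sum.swap)
      also have "\<dots> = (\<Sum>x\<in>Xc. r s a x * (\<Sum>b<m. r s b x * c (es ! b)))" by (simp add: sum_distrib_left)
      also have "\<dots> = 0" using zz by simp
      finally show "(G s *\<^sub>v v) $ a = 0\<^sub>v m $ a" using a by simp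
    qed
    moreover have "v \<in> carrier_vec m" unfolding v_def by simp
    ultimately have "v = 0\<^sub>v m" using det_0_iff_vec_prod_zero[OF Gc[of s]] dz by blast
    have cz: "c (es ! a) = 0" if "a < m" for a
    proof -
      have "v $ a = 0" using that by (simp add: \<open>v = 0\<^sub>v m\<close>)
      then show ?thesis using that unfolding v_def by simp
    qed
    show "\<forall>e\<in>F. c e = 0"
    proof
      fix e assume "e \<in> F"
      then obtain a where "a < m" "e = es ! a" using es(2) unfolding m_def by (auto simp: in_set_conv_nth)
      then show "c e = 0" using cz by simp
    qed
  qed
  have K1: "det (G s) \<noteq> 0" if ind: "indepm W d (P s) F" for s
  proof
    assume "det (G s) = 0"
    then obtain v where v: "v \<in> carrier_vec m" "v \<noteq> 0\<^sub>v m" "G s *\<^sub>v v = 0\<^sub>v m"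
      using det_0_iff_vec_prod_zero[OF Gc[of s]] by blast
    define y where "y x = (\<Sum>a<m. v $ a * r s a x)" for x
    have Gv: "(G s *\<^sub>v v) $ a = (\<Sum>b<m. (\<Sum>x\<in>Xc. r s a x * r s b x) * v $ b)" if "a < m" for a
      using that v(1) unfolding G_def by (simp add: scalar_prod_def atLeast0LessThan)
    have "(\<Sum>a<m. v $ a * (G s *\<^sub>v v) $ a) = 0" using v(3) by simp
    moreover have "(\<Sum>a<m. v $ a * (G s *\<^sub>v v) $ a) = (\<Sum>x\<in>Xc. (y x)\<^sup>2)"
    proof -
      have "(\<Sum>a<m. v $ a * (G s *\<^sub>v v) $ a) = (\<Sum>a<m. v $ a * (\<Sum>b<m. (\<Sum>x\<in>Xc. r s a x * r s b x) * v $ b))"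
        using Gv by simp
      also have "\<dots> = (\<Sum>a<m. \<Sum>b<m. \<Sum>x\<in>Xc. (v $ a * r s a x) * (v $ b * r s b x))"
        by (simp add: sum_distrib_left sum_distrib_right mult_ac)
      also have "\<dots> = (\<Sum>a<m. \<Sum>x\<in>Xc. \<Sum>b<m. (v $ a * r s a x) * (v $ b * r s b x))"
        by (simp add: sum.swap[of _ "{..<m}" Xc])
      also have "\<dots> = (\<Sum>x\<in>Xc. \<Sum>a<m. \<Sum>b<m. (v $ a * r s a x) * (v $ b * r s b x))"
        by (rule sum.swap)
      also have "\<dots> = (\<Sum>x\<in>Xc. (y x)\<^sup>2)"
        unfolding y_def power2_eq_square by (simp add: sum_product)
      finally show ?thesis .
    qed
    ultimately have "(\<Sum>x\<in>Xc. (y x)\<^sup>2) = 0" by simp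
    then have y0: "y x = 0" if "x \<in> Xc" for x
      using sum_nonneg_eq_0_iff[OF finXc, of "\<lambda>x. (y x)\<^sup>2"] that by simp
    define c where "c e = (\<Sum>a<m. if es ! a = e then v $ a else 0)" for e
    have ce: "c (es ! b) = v $ b" if "b < m" for b
    proof -
      have "c (es ! b) = (\<Sum>a<m. if a = b then v $ a else 0)"
        unfolding c_def using es(1) that unfolding m_def by (intro sum.cong) (auto simp: nth_eq_iff_index_eq)
      then show ?thesis using that by simp
    qed
    have "\<forall>e\<in>F. c e = 0"
      using ind unfolding indepm_def
    proof (elim conjE allE impE)
      show "\<forall>w i. i < d \<longrightarrow> (\<Sum>e\<in>F. c e * rowm W (P s) e w i) = 0"
      proof (intro allI impI)
        fix w i assume i: "i < d"
        have "(\<Sum>e\<in>F. c e * rowm W (P s) e w i) = (\<Sum>b<m. v $ b * r s b (w, i))"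
          unfolding sumF r_eq using ce by simp
        also have "\<dots> = 0"
        proof (cases "w \<in> \<Union>F")
          case True
          then have "(w, i) \<in> Xc" unfolding Xc_def using i by simp
          then show ?thesis using y0 unfolding y_def by simp
        next
          case False
          have "r s b (w, i) = 0" if "b < m" for b
          proof -
            have "es ! b \<in> F" using that es unfolding m_def by auto
            then have "w \<notin> es ! b" using False by blast
            then have z0: "rig_row (P s) (es ! b) w i = 0" by (rule rig_row_out)
            have "r s b (w, i) = rowm W (P s) (es ! b) w i" using r_eq[of s b w i] by simp
            also have "\<dots> = 0" unfolding rowm_def using z0 by simp
            finally show ?thesis .
          qed
          then show ?thesis by simp
        qed
        finally show "(\<Sum>e\<in>F. c e * rowm W (P s) e w i) = 0" .
      qed
    qed
    then have "v $ b = 0" if "b < m" for b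
      using that ce es unfolding m_def by (metis nth_mem)
    then have "v = 0\<^sub>v m" using v(1) by (intro eq_vecI) auto
    then show False using v(2) by simp
  qed
  have "det (G s0) \<noteq> 0" using K1 good unfolding P_def by blast
  then have dQ: "det Q \<noteq> 0" using detG by auto
  have "{s. \<not> indepm W d (\<lambda>w i. p w i + s * q w i) F} \<subseteq> {s. poly (det Q) s = 0}"
  proof (rule subsetI)
    fix s assume "s \<in> {s. \<not> indepm W d (\<lambda>w i. p w i + s * q w i) F}"
    then have "\<not> indepm W d (P s) F" unfolding P_def by simp
    then have "det (G s) = 0" using K2 by blast
    then show "s \<in> {s. poly (det Q) s = 0}" using detG by simp
  qed
  moreover have "finite {s. poly (det Q) s = 0}" by (rule poly_roots_finite[OF dQ])
  ultimately show ?thesis by (rule finite_subset)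
qed

lemma generic:
  assumes "finite Cs"
    and "\<And>W F. (W, F) \<in> Cs \<Longrightarrow> finite F \<and> (\<forall>e\<in>F. finite e) \<and> (\<exists>p. indepm W d p F)"
  shows "\<exists>p. \<forall>C\<in>Cs. indepm (fst C) d p (snd C)"
  using assms
proof (induction Cs rule: finite_induct)
  case empty then show ?case by simp
next
  case (insert C Cs)
  obtain W0 F0 where C: "C = (W0, F0)" by fastforce
  have "\<exists>p. \<forall>C\<in>Cs. indepm (fst C) d p (snd C)"
    using insert.IH insert.prems by blast
  then obtain p where p: "\<And>C'. C' \<in> Cs \<Longrightarrow> indepm (fst C') d p (snd C')" by blast
  have c0: "finite F0" "\<forall>e\<in>F0. finite e" "\<exists>p. indepm W0 d p F0" using insert.prems[of W0 F0] C by auto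
  obtain p' where p': "indepm W0 d p' F0" using c0(3) by blast
  define q where "q w i = p' w i - p w i" for w i
  define P where "P s = (\<lambda>w i. p w i + s * q w i)" for s :: real
  have P0: "P 0 = p" unfolding P_def by simp
  have P1: "P 1 = p'" unfolding P_def q_def by simp
  define bad where "bad C' = {s. \<not> indepm (fst C') d (P s) (snd C')}" for C' :: "'a set \<times> 'a set set"
  have finbad: "finite (bad C')" if C': "C' \<in> insert C Cs" for C'
  proof -
    obtain W F where WF: "C' = (W, F)" by fastforce
    have props: "finite F" "\<And>e. e \<in> F \<Longrightarrow> finite e" using insert.prems[of W F] C' WF by auto
    have "\<exists>s0. indepm W d (\<lambda>w i. p w i + s0 * q w i) F"
    proof (cases "C' = C")
      case True
      then have "indepm W d (P 1) F" using P1 p' C WF by simp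
      then show ?thesis unfolding P_def by blast
    next
      case False
      then have "C' \<in> Cs" using C' by simp
      then have "indepm W d (P 0) F" using p[of C'] P0 WF by simp
      then show ?thesis unfolding P_def by blast
    qed
    then obtain s0 where "indepm W d (\<lambda>w i. p w i + s0 * q w i) F" by blast
    from finite_bad[OF props this] show ?thesis unfolding bad_def P_def WF by simp
  qed
  have "finite (\<Union>C'\<in>insert C Cs. bad C')" using finbad insert.hyps(1) by blast
  then obtain s where s: "s \<notin> (\<Union>C'\<in>insert C Cs. bad C')"
    using ex_new_if_finite[OF infinite_UNIV_char_0] by blast
  show ?case
  proof (intro exI[of _ "P s"] ballI)
    fix C' assume "C' \<in> insert C Cs"
    then show "indepm (fst C') d (P s) (snd C')" using s unfolding bad_def by blast
  qed
qed

lemma star_witness: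
  assumes S: "\<And>e. e \<in> S \<Longrightarrow> \<exists>u. u \<noteq> v \<and> e = {v, u}" and finS: "finite S" and cS: "card S \<le> d"
  shows "\<exists>p. indepm {v} d p S"
proof -
  obtain f where f: "bij_betw f S {..<card S}" using ex_bij_betw_finite_nat[OF finS] by (auto simp: atLeast0LessThan)
  define p where "p w i = (if w \<noteq> v \<and> {v, w} \<in> S \<and> i = f {v, w} then -1 else (0::real))" for w i
  have row: "rig_row p e v i = (if i = f e then 1 else 0)" if e: "e \<in> S" for e i
  proof -
    obtain u where u: "u \<noteq> v" "e = {v, u}" using S[OF e] by blast
    have th: "(THE u'. u' \<in> e \<and> u' \<noteq> v) = u" unfolding u(2) using u(1) by (intro the_equality) auto
    have "p v i = 0" unfolding p_def by simp
    moreover have "p u i = (if i = f e then -1 else 0)" unfolding p_def using u e by auto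
    ultimately show ?thesis unfolding rig_row_def th using u by simp
  qed
  have "indepm {v} d p S" unfolding indepm_def
  proof (intro conjI finS allI impI ballI)
    fix c :: "'a set \<Rightarrow> real" and e
    assume z: "\<forall>w i. i < d \<longrightarrow> (\<Sum>e\<in>S. c e * rowm {v} p e w i) = 0" and e: "e \<in> S"
    have "f e \<in> {..<card S}" using bij_betwE[OF f] e by blast
    then have fe: "f e < d" using cS by simp
    have "(\<Sum>e'\<in>S. c e' * rowm {v} p e' v (f e)) = 0" using z fe by blast
    moreover have "(\<Sum>e'\<in>S. c e' * rowm {v} p e' v (f e)) = (\<Sum>e'\<in>S. if e' = e then c e' else 0)"
    proof (rule sum.cong[OF refl])
      fix e' assume e': "e' \<in> S"
      have "f e = f e' \<longleftrightarrow> e = e'" using f e e' unfolding bij_betw_def inj_on_def by blast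
      then show "c e' * rowm {v} p e' v (f e) = (if e' = e then c e' else 0)"
        unfolding rowm_def using row[OF e'] by auto
    qed
    moreover have "(\<Sum>e'\<in>S. if e' = e then c e' else 0) = c e" using e finS by simp
    ultimately show "c e = 0" by simp
  qed
  then show ?thesis by blast
qed

theorem lemma3p8:
  fixes V :: "'a set" and E :: "'a set set" and v :: 'a and d :: nat and t :: real
  assumes "is_graph V E" and "v \<in> V" and "d \<ge> 1" and "t \<ge> 0"
    and "real (rig_rank d E) \<ge> real (rig_rank d (E - inc_edges E v)) + real d + t"
  shows "rc_star d V E v \<ge>
    real d + (t * (real (degree E v) - real d + 1) - real d * (real d + 1))
              / (2 * (real (degree E v) + 1))"
proof -
  note G = assms(1) and vV = assms(2) and t0 = assms(4) and rk = assms(5)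
  define N where "N = inc_edges E v"
  define H where "H = E - N"
  define Nv where "Nv = {u. {v, u} \<in> E}"
  define SU where "SU U = {e \<in> N. \<exists>u\<in>U. e = {v, u}}" for U
  define \<Psi> where "\<Psi> U = real (rig_rank d (H \<union> SU U)) - real (rig_rank d H)" for U
  have finV: "finite V" and edg: "\<And>e. e \<in> E \<Longrightarrow> e \<subseteq> V \<and> card e = 2"
    using G unfolding is_graph_def by auto
  have finE: "finite E"
  proof -
    have "E \<subseteq> Pow V" using edg by auto
    then show ?thesis using finV by (meson finite_Pow_iff finite_subset)
  qed
  have fine: "finite e" if "e \<in> E" for e
    using edg[OF that] by (metis card.infinite zero_neq_numeral)
  have NE: "N \<subseteq> E" unfolding N_def inc_edges_def by auto
  have Nform: "\<exists>u. u \<noteq> v \<and> e = {v, u}" if e: "e \<in> N" for e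
  proof -
    have "e \<in> E" "v \<in> e" using e unfolding N_def inc_edges_def by auto
    then have "card e = 2" using edg by blast
    then obtain x y where xy: "e = {x, y}" "x \<noteq> y" unfolding card_2_iff by blast
    then show ?thesis using \<open>v \<in> e\<close> by (auto simp: insert_commute)
  qed
  have vNv: "v \<notin> Nv"
  proof
    assume "v \<in> Nv"
    then have "{v} \<in> E" unfolding Nv_def by simp
    then show False using edg[of "{v}"] by simp
  qed
  have NvV: "Nv \<subseteq> V"
  proof
    fix u assume "u \<in> Nv"
    then have "{v, u} \<in> E" unfolding Nv_def by simp
    then show "u \<in> V" using edg[of "{v, u}"] by simp
  qed
  have NvN: "{v, u} \<in> N" if "u \<in> Nv" for u using that unfolding Nv_def N_def inc_edges_def by simp
  have NNv: "u \<in> Nv" if "{v, u} \<in> N" for u using that NE unfolding Nv_def by auto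
  have injv: "inj_on (\<lambda>u. {v, u}) Nv"
    by (rule inj_onI) (use vNv in \<open>auto simp: doubleton_eq_iff\<close>)
  have SUimg: "SU U = (\<lambda>u. {v, u}) ` U" if "U \<subseteq> Nv" for U
    unfolding SU_def using that NvN by auto
  have SUsub: "SU U \<subseteq> N" for U unfolding SU_def by auto
  have SUrestr: "SU U = SU (U \<inter> Nv)" for U unfolding SU_def using NNv by auto
  have SUins: "SU (insert a T) = insert {v, a} (SU T)" if "a \<in> Nv" for a T
    unfolding SU_def using NvN[OF that] by auto
  have SUN: "SU Nv = N"
  proof
    show "SU Nv \<subseteq> N" by (rule SUsub)
    show "N \<subseteq> SU Nv"
    proof
      fix e assume e: "e \<in> N"
      then obtain u where u: "u \<noteq> v" "e = {v, u}" using Nform by blast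
      then have "u \<in> Nv" using NNv e by simp
      then show "e \<in> SU Nv" unfolding SU_def using e u by blast
    qed
  qed
  have SUcard: "card (SU U) = card U" if "U \<subseteq> Nv" for U
    using SUimg[OF that] card_image[OF inj_on_subset[OF injv that]] by simp
  have degN: "degree E v = card Nv"
  proof -
    have "N = (\<lambda>u. {v, u}) ` Nv" using SUN SUimg[of Nv] by simp
    then have "card N = card Nv" using card_image[OF injv] by simp
    then show ?thesis unfolding Defs.degree_def N_def .
  qed
  have HE: "H \<subseteq> E" unfolding H_def by auto
  have HN: "H \<union> N = E" unfolding H_def using NE by auto
  have vH: "v \<notin> e" if "e \<in> H" for e using that unfolding H_def N_def inc_edges_def by auto
  define Cs where "Cs = (\<lambda>F. (UNIV :: 'a set, F)) ` {F. F \<subseteq> E \<and> rig_indep d F} \<union> (\<lambda>S. ({v}, S)) ` {S. S \<subseteq> N \<and> card S \<le> d}"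
  have finCs: "finite Cs" unfolding Cs_def using finE NE by (auto intro: finite_subset[of _ "Pow E"])
  have "\<exists>p. \<forall>C\<in>Cs. indepm (fst C) d p (snd C)"
  proof (rule generic[OF finCs])
    fix W F assume WF: "(W, F) \<in> Cs"
    show "finite F \<and> (\<forall>e\<in>F. finite e) \<and> (\<exists>p. indepm W d p F)"
    proof (cases "W = {v} \<and> F \<subseteq> N \<and> card F \<le> d")
      case True
      have fF: "finite F" using True NE by (intro finite_subset[OF _ finE]) auto
      have "\<exists>p. indepm {v} d p F"
        by (rule star_witness) (use True Nform fF in auto)
      moreover have "\<forall>e\<in>F. finite e" using True NE fine by blast
      ultimately show ?thesis using True fF by simp
    next
      case False
      then have "F \<subseteq> E \<and> rig_indep d F \<and> W = UNIV" using WF unfolding Cs_def by auto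
      then have FE: "F \<subseteq> E" and ri: "rig_indep d F" and WU: "W = UNIV" by auto
      have "finite F" using FE by (rule finite_subset[OF _ finE])
      moreover have "\<forall>e\<in>F. finite e" using FE fine by blast
      moreover obtain p0 where "rows_indep d p0 F" using ri unfolding rig_indep_def by blast
      then have "indepm W d p0 F" unfolding WU indepm_UNIV .
      ultimately show ?thesis by blast
    qed
  qed
  then obtain p where gp: "\<And>C. C \<in> Cs \<Longrightarrow> indepm (fst C) d p (snd C)" by blast
  have genA: "rows_indep d p F" if "F \<subseteq> E" "rig_indep d F" for F
  proof -
    have "(UNIV, F) \<in> Cs" unfolding Cs_def using that by blast
    then have "indepm UNIV d p F" using gp[of "(UNIV, F)"] by simp
    then show ?thesis unfolding indepm_UNIV .
  qed
  have genC: "indepm {v} d p S" if "S \<subseteq> N" "card S \<le> d" for S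
  proof -
    have "({v}, S) \<in> Cs" unfolding Cs_def using that by blast
    then show ?thesis using gp[of "({v}, S)"] by simp
  qed
  have rd: "rig_rank d X = fvs.dim (rowv d p ` X)" if "X \<subseteq> E" for X
    by (rule rank_dim[OF finE genA that])
  have sE: "H \<union> SU U \<subseteq> E" for U using HE SUsub[of U] NE by blast
  have finH: "finite (H \<union> SU U)" for U using sE[of U] by (rule finite_subset[OF _ finE])
  have finR: "finite (rowv d p ` (H \<union> SU U))" for U using finH by simp
  have restr: "\<Psi> U = \<Psi> (U \<inter> Nv)" for U unfolding \<Psi>_def using SUrestr[of U] by simp
  have empty: "\<Psi> {} = 0" unfolding \<Psi>_def SU_def by simp
  have inc1: "\<Psi> (insert a T) \<le> \<Psi> T + 1" if "T \<subseteq> Nv" "a \<in> Nv" for T a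
  proof -
    have e: "H \<union> SU (insert a T) = insert {v, a} (H \<union> SU T)" using SUins[OF that(2)] by auto
    have "rig_rank d (H \<union> SU (insert a T)) = fvs.dim (insert (rowv d p {v, a}) (rowv d p ` (H \<union> SU T)))"
      using rd[OF sE[of "insert a T"]] unfolding e by simp
    also have "\<dots> \<le> fvs.dim (rowv d p ` (H \<union> SU T)) + 1" by (rule fvs_dim_insert_le[OF finR])
    also have "fvs.dim (rowv d p ` (H \<union> SU T)) = rig_rank d (H \<union> SU T)" using rd[OF sE[of T]] by simp
    finally show ?thesis unfolding \<Psi>_def by simp
  qed
  have submod: "\<Psi> (insert a (insert b T)) + \<Psi> T \<le> \<Psi> (insert a T) + \<Psi> (insert b T)"
    if "T \<subseteq> Nv" "a \<in> Nv" "b \<in> Nv" for T a b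
  proof -
    define R where "R = rowv d p ` (H \<union> SU T)"
    have e1: "H \<union> SU (insert a (insert b T)) = insert {v, a} (insert {v, b} (H \<union> SU T))"
      using SUins[OF that(2)] SUins[OF that(3)] by auto
    have e2: "H \<union> SU (insert a T) = insert {v, a} (H \<union> SU T)" using SUins[OF that(2)] by auto
    have e3: "H \<union> SU (insert b T) = insert {v, b} (H \<union> SU T)" using SUins[OF that(3)] by auto
    have r1: "rig_rank d (H \<union> SU (insert a (insert b T))) = fvs.dim (insert (rowv d p {v, a}) (insert (rowv d p {v, b}) R))"
      using rd[OF sE[of "insert a (insert b T)"]] unfolding e1 R_def by simp
    have r2: "rig_rank d (H \<union> SU (insert a T)) = fvs.dim (insert (rowv d p {v, a}) R)"
      using rd[OF sE[of "insert a T"]] unfolding e2 R_def by simp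
    have r3: "rig_rank d (H \<union> SU (insert b T)) = fvs.dim (insert (rowv d p {v, b}) R)"
      using rd[OF sE[of "insert b T"]] unfolding e3 R_def by simp
    have r4: "rig_rank d (H \<union> SU T) = fvs.dim R" using rd[OF sE[of T]] unfolding R_def by simp
    have "fvs.dim (insert (rowv d p {v, a}) (insert (rowv d p {v, b}) R)) + fvs.dim R
        \<le> fvs.dim (insert (rowv d p {v, a}) R) + fvs.dim (insert (rowv d p {v, b}) R)"
      using fvs_dim_submod[OF finR[of T], of "rowv d p {v, a}" "rowv d p {v, b}"] unfolding R_def by simp
    then show ?thesis unfolding \<Psi>_def r1 r2 r3 r4 by linarith
  qed
  have lowb: "real (card U) \<le> \<Psi> U" if U: "U \<subseteq> Nv" "card U \<le> d" for U
  proof -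
    define S where "S = SU U"
    have SN: "S \<subseteq> N" unfolding S_def by (rule SUsub)
    have cS: "card S = card U" unfolding S_def by (rule SUcard[OF U(1)])
    have finHH: "finite H" using HE by (rule finite_subset[OF _ finE])
    obtain B where B: "B \<subseteq> H" "rig_indep d B" "card B = rig_rank d H"
      using rank_attained[OF finHH] by blast
    have finB: "finite B" using B(1) by (rule finite_subset[OF _ finHH])
    have finS: "finite S" using SN NE by (intro finite_subset[OF _ finE]) auto
    have rB: "rows_indep d p B" using B(1) HE by (intro genA[OF _ B(2)]) auto
    have iS: "indepm {v} d p S" using genC SN cS U(2) by simp
    have disj: "B \<inter> S = {}" using B(1) SN unfolding H_def by blast
    have "rows_indep d p (B \<union> S)" unfolding rows_indep_def
    proof (intro conjI allI impI)
      show "finite (B \<union> S)" using finB finS by simp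
      fix c :: "'a set \<Rightarrow> real"
      assume z: "\<forall>w i. i < d \<longrightarrow> (\<Sum>e\<in>B \<union> S. c e * rig_row p e w i) = 0"
      have spl: "(\<Sum>e\<in>B \<union> S. c e * rig_row p e w i) = (\<Sum>e\<in>B. c e * rig_row p e w i) + (\<Sum>e\<in>S. c e * rig_row p e w i)" for w i
        by (rule sum.union_disjoint[OF finB finS disj])
      have Bv: "(\<Sum>e\<in>B. c e * rig_row p e v i) = 0" for i
        using B(1) vH by (intro sum.neutral) (auto simp: rig_row_out)
      have "\<forall>w i. i < d \<longrightarrow> (\<Sum>e\<in>S. c e * rowm {v} p e w i) = 0"
      proof (intro allI impI)
        fix w i assume i: "i < d"
        show "(\<Sum>e\<in>S. c e * rowm {v} p e w i) = 0"
        proof (cases "w = v")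
          case True
          then show ?thesis using z[rule_format, OF i, of v] spl[of v i] Bv[of i] unfolding rowm_def by simp
        next
          case False
          then show ?thesis unfolding rowm_def by simp
        qed
      qed
      then have cS0: "\<forall>e\<in>S. c e = 0" using iS unfolding indepm_def by blast
      have "\<forall>w i. i < d \<longrightarrow> (\<Sum>e\<in>B. c e * rig_row p e w i) = 0"
      proof (intro allI impI)
        fix w i assume i: "i < d"
        have "(\<Sum>e\<in>S. c e * rig_row p e w i) = 0" using cS0 by simp
        then show "(\<Sum>e\<in>B. c e * rig_row p e w i) = 0" using z[rule_format, OF i, of w] spl[of w i] by simp
      qed
      then have "\<forall>e\<in>B. c e = 0" using rB unfolding rows_indep_def by blast
      then show "\<forall>e\<in>B \<union> S. c e = 0" using cS0 by blast
    qed
    then have "rig_indep d (B \<union> S)" unfolding rig_indep_def by blast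
    moreover have "B \<union> S \<subseteq> H \<union> S" using B(1) by blast
    ultimately have "card (B \<union> S) \<le> rig_rank d (H \<union> S)"
      using rank_ge[OF finH[of U]] unfolding S_def by simp
    moreover have "card (B \<union> S) = card B + card S" using card_Un_disjoint[OF finB finS disj] .
    ultimately show ?thesis unfolding \<Psi>_def S_def[symmetric] using B(3) cS by simp
  qed
  have top: "real d + t \<le> \<Psi> Nv"
    unfolding \<Psi>_def SUN HN using rk unfolding H_def N_def by simp
  have main: "real d + (t * (real (card Nv) - real d + 1) - real d * (real d + 1)) / (2 * (real (card Nv) + 1))
     \<le> (\<Sum>\<pi>\<in>orderings V. \<Psi> (preceding \<pi> v)) / real (card (orderings V))"
    by (rule comb_main[OF finV vV NvV vNv restr empty inc1 submod lowb top t0])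
  have "rc_star d V E v = (\<Sum>\<pi>\<in>orderings V. \<Psi> (preceding \<pi> v)) / real (card (orderings V))"
    unfolding rc_star_def rc_star_pi_def \<Psi>_def SU_def H_def N_def inc_edges_pi_def ..
  then show ?thesis using main unfolding degN by simp
qed

end
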